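(* Let $X$ be a locally compact Polish space with compatible metric $d$. Suppose there are a closed discrete sequence $(x_n)_{n\in\mathbb N}$ of distinct points of $X$ and pairwise disjoint open sets $U_n\ni x_n$ such that each $U_n$ is a topological manifold of positive dimension. Then $(X,d)$ is flexible. In particular, every noncompact, second-countable topological manifold of positive dimension, with any compatible metric, is flexible.
   Context: For closed $Y\subseteq X$, $\partial_X Y=Y\cap\overline{X\setminus Y}$ and $\mathrm{Homeo}_{\partial}(Y)$ is the group of homeomorphisms of $Y$ fixing each point of $\partial_X Y$; such $\phi$ extends to a homeomorphism $\tilde\phi$ of $X$ equal to the identity off $Y$, and its radius is $r(\phi)=\sup_{x\in X}d(x,\tilde\phi(x))$. A locally compact noncompact Polish space $X$ with compatible metric $d$ is flexible if there are pairwise disjoint sets $Y_n\subseteq X$ and $\phi_{n,m}\in\mathrm{Homeo}_\partial(Y_n)$ ($n,m\in\mathbb N$) such that: (1) each $Y_n$ is compact and no compact subset of $X$ meets infinitely many $Y_n$; (2) for each $n$, $(r(\phi_{n,m}))_m$ is decreasing and tends to $0$, and $r(\phi_{n,m})\ne0$ for all $n,m$. *)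

theory Defs
  imports "HOL-Analysis.Analysis"
begin

text \<open>The ambient space X is the whole type 'a, with metric d = dist.\<close>

definition Polish_topology :: "'b topology \<Rightarrow> bool" where
  "Polish_topology T \<longleftrightarrow> separable_space T \<and> completely_metrizable_space T"

definition rel_boundary :: "'a::topological_space set \<Rightarrow> 'a set" where
  "rel_boundary Y = Y \<inter> closure (UNIV - Y)"

definition Homeo_boundary :: "'a::topological_space set \<Rightarrow> ('a \<Rightarrow> 'a) set" where
  "Homeo_boundary Y = {\<phi>. (\<exists>\<psi>. homeomorphism Y Y \<phi> \<psi>) \<and> (\<forall>x\<in>rel_boundary Y. \<phi> x = x)}"

definition ext_id :: "'a set \<Rightarrow> ('a \<Rightarrow> 'a) \<Rightarrow> 'a \<Rightarrow> 'a" where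
  "ext_id Y \<phi> x = (if x \<in> Y then \<phi> x else x)"

definition radius :: "'a::metric_space set \<Rightarrow> ('a \<Rightarrow> 'a) \<Rightarrow> real" where
  "radius Y \<phi> = (SUP x. dist x (ext_id Y \<phi> x))"

definition flexible :: "'a::metric_space itself \<Rightarrow> bool" where
  "flexible _ \<longleftrightarrow>
     locally_compact_space (euclidean :: 'a topology) \<and>
     \<not> compact (UNIV :: 'a set) \<and>
     Polish_topology (euclidean :: 'a topology) \<and>
     (\<exists>(Y :: nat \<Rightarrow> 'a set) (\<phi> :: nat \<Rightarrow> nat \<Rightarrow> 'a \<Rightarrow> 'a).
        (\<forall>n m. n \<noteq> m \<longrightarrow> Y n \<inter> Y m = {}) \<and>
        (\<forall>n. compact (Y n)) \<and>
        (\<forall>K. compact K \<longrightarrow> finite {n. K \<inter> Y n \<noteq> {}}) \<and>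
        (\<forall>n m. \<phi> n m \<in> Homeo_boundary (Y n)) \<and>
        (\<forall>n. decseq (\<lambda>m. radius (Y n) (\<phi> n m))) \<and>
        (\<forall>n. (\<lambda>m. radius (Y n) (\<phi> n m)) \<longlonglongrightarrow> 0) \<and>
        (\<forall>n m. radius (Y n) (\<phi> n m) \<noteq> 0))"

text \<open>U (with the subspace topology) is a topological manifold of dimension k:
  every point has an open neighbourhood in U homeomorphic to an open subset of R^k.
  (Hausdorffness and second countability are automatic for subspaces of a separable
  metric space.)\<close>
definition topological_manifold_of_dim :: "'a::topological_space set \<Rightarrow> nat \<Rightarrow> bool" where
  "topological_manifold_of_dim U k \<longleftrightarrow>
     (\<forall>x\<in>U. \<exists>V W. openin (top_of_set U) V \<and> x \<in> V \<and>
        openin (Euclidean_space k) W \<and> top_of_set V homeomorphic_space subtopology (Euclidean_space k) W)"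

end

theory Submission imports Defs begin
lemma hm: "homeomorphic_maps (top_of_set S) (top_of_set T) f g \<Longrightarrow> homeomorphism S T f g"
  unfolding homeomorphic_maps_def homeomorphism_def
  by (auto simp: Pi_iff image_iff) (metis)+

definition cube :: "nat \<Rightarrow> (nat\<Rightarrow>real) \<Rightarrow> real \<Rightarrow> (nat\<Rightarrow>real) set" where
 "cube k c s = {y. (\<forall>i<k. \<bar>y i - c i\<bar> \<le> s) \<and> (\<forall>i\<ge>k. y i = 0)}"
definition ocube :: "nat \<Rightarrow> (nat\<Rightarrow>real) \<Rightarrow> real \<Rightarrow> (nat\<Rightarrow>real) set" where
 "ocube k c s = {y. (\<forall>i<k. \<bar>y i - c i\<bar> < s) \<and> (\<forall>i\<ge>k. y i = 0)}"

lemma compact_cube: "compact (cube k c s)"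
proof -
  have "cube k c s = PiE UNIV (\<lambda>i. if i<k then {c i - s..c i + s} else {0})"
  proof (intro set_eqI)
    fix y
    have "y \<in> cube k c s \<longleftrightarrow> (\<forall>i. (i < k \<longrightarrow> \<bar>y i - c i\<bar> \<le> s) \<and> (\<not> i < k \<longrightarrow> y i = 0))"
      unfolding cube_def by (auto simp: not_less)
    also have "\<dots> \<longleftrightarrow> (\<forall>i. y i \<in> (if i<k then {c i - s..c i + s} else {0}))"
    proof -
      have "((i < k \<longrightarrow> \<bar>y i - c i\<bar> \<le> s) \<and> (\<not> i < k \<longrightarrow> y i = 0)) \<longleftrightarrow> y i \<in> (if i<k then {c i - s..c i + s} else {0})" for i
        by (cases "i < k") (auto simp: abs_le_iff)
      then show ?thesis by simp
    qed
    finally show "y \<in> cube k c s \<longleftrightarrow> y \<in> PiE UNIV (\<lambda>i. if i<k then {c i - s..c i + s} else {0})"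
      by (simp add: PiE_iff)
  qed

  moreover have "compactin (product_topology (\<lambda>i. euclideanreal) UNIV) (PiE UNIV (\<lambda>i. if i<k then {c i - s..c i + s} else {0}))"
    by (subst compactin_PiE) auto
  ultimately show ?thesis by (simp add: euclidean_product_topology)
qed

lemma open_ocube: "openin (top_of_set {y. \<forall>i\<ge>k. y i = 0}) (ocube k c s)"
proof -
  have "open {f::nat\<Rightarrow>real. \<forall>i\<in>{..<k}. f (id i) \<in> ball (c i) s}"
    by (rule product_topology_basis') auto
  moreover have "ocube k c s = {y. \<forall>i\<ge>k. y i = 0} \<inter> {f::nat\<Rightarrow>real. \<forall>i\<in>{..<k}. f (id i) \<in> ball (c i) s}"
    by (auto simp: ocube_def dist_real_def abs_minus_commute)
  ultimately show ?thesis by (auto simp: openin_open)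
qed

lemma cube_in_open:
  fixes Op :: "(nat\<Rightarrow>real) set"
  assumes "open Op" "c \<in> Op" "\<forall>i\<ge>k. c i = 0"
  shows "\<exists>s>0. cube k c s \<subseteq> Op"
proof -
  obtain r where r: "r > 0" "ball c r \<subseteq> Op" using assms open_contains_ball by blast
  obtain N where N: "(1/2::real)^N < r/2"
    using real_arch_pow_inv[of "r/2" "1/2"] r by auto
  have "cube k c (r/8) \<subseteq> ball c r"
  proof
    fix y assume y: "y \<in> cube k c (r/8)"
    have yi: "dist (y i) (c i) \<le> r/8" for i
      using y r assms(3) by (cases "i < k") (auto simp: cube_def dist_real_def)
    have "Max {dist (y (from_nat n)) (c (from_nat n))|n. n \<le> N} \<le> r/8"
      using yi by (subst Max_le_iff) force+
    moreover have "dist y c \<le> 2 * Max {dist (y (from_nat n)) (c (from_nat n))|n. n \<le> N} + (1/2)^N"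
      by (rule dist_fun_le_dist_first_terms)
    ultimately have "dist y c < r" using N r by linarith
    then show "y \<in> ball c r" by (simp add: dist_commute)
  qed
  then show ?thesis using r by (intro exI[of _ "r/8"]) auto
qed

definition bet :: "nat \<Rightarrow> (nat\<Rightarrow>real) \<Rightarrow> real \<Rightarrow> (nat\<Rightarrow>real) \<Rightarrow> real" where
  "bet k c s y = (\<Prod>i\<in>{1..<k}. max 0 (1 - \<bar>y i - c i\<bar> / s))"
definition Fm :: "nat \<Rightarrow> (nat\<Rightarrow>real) \<Rightarrow> real \<Rightarrow> (nat\<Rightarrow>real) \<Rightarrow> (nat\<Rightarrow>real)" where
  "Fm k c s y = (\<lambda>i. if i = 0 then y 0 + bet k c s y / 2 * max 0 (s - \<bar>y 0 - c 0\<bar>) else y i)"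

lemma bet_range: "s > 0 \<Longrightarrow> 0 \<le> bet k c s y"  "s > 0 \<Longrightarrow> bet k c s y \<le> 1"
  unfolding bet_def by (auto intro!: prod_nonneg prod_le_1)

lemma bet_cong: "(\<And>i. i \<ge> 1 \<Longrightarrow> y i = z i) \<Longrightarrow> bet k c s y = bet k c s z"
  unfolding bet_def by (intro prod.cong) auto

lemma coord_cont [continuous_intros]: "continuous_on S (\<lambda>y::nat\<Rightarrow>real. y i)"
  by (rule continuous_on_subset[OF continuous_on_product_coordinates]) simp

lemma cont_Fm: assumes "s > 0" shows "continuous_on UNIV (Fm k c s)"
proof (intro continuous_on_coordinatewise_then_product)
  fix i
  show "continuous_on UNIV (\<lambda>x. Fm k c s x i)"
  proof (cases "i = 0")
    case True
    then show ?thesis unfolding Fm_def bet_def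
      using assms by simp (intro continuous_intros; auto)
  next
    case False
    then show ?thesis unfolding Fm_def by (simp add: coord_cont)
  qed
qed

lemma oned_mono:
  fixes b s a u v :: real
  assumes "0 \<le> b" "b \<le> 1/2" "u < v"
  shows "u + b * max 0 (s - \<bar>u - a\<bar>) < v + b * max 0 (s - \<bar>v - a\<bar>)"
proof -
  have "\<bar>\<bar>v - a\<bar> - \<bar>u - a\<bar>\<bar> \<le> \<bar>(v - a) - (u - a)\<bar>" by (rule abs_triangle_ineq3)
  then have L: "max 0 (s - \<bar>u - a\<bar>) - max 0 (s - \<bar>v - a\<bar>) \<le> v - u"
    using assms by (simp add: max_def) linarith
  have "b * (max 0 (s - \<bar>u - a\<bar>) - max 0 (s - \<bar>v - a\<bar>)) \<le> b * (v - u)"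
    by (rule mult_left_mono[OF L assms(1)])
  moreover have "b * (v - u) < 1 * (v - u)"
    by (rule mult_strict_right_mono) (use assms in auto)
  ultimately show ?thesis by (simp add: algebra_simps)
qed
lemma inj_Fm: assumes "s > 0" shows "inj (Fm k c s)"
proof (rule injI)
  fix y z assume eq: "Fm k c s y = Fm k c s z"
  have oth: "y i = z i" if "i \<ge> 1" for i
    using fun_cong[OF eq, of i] that by (simp add: Fm_def)
  have b: "bet k c s y = bet k c s z" using oth by (rule bet_cong)
  have e0: "y 0 + bet k c s y / 2 * max 0 (s - \<bar>y 0 - c 0\<bar>) = z 0 + bet k c s y / 2 * max 0 (s - \<bar>z 0 - c 0\<bar>)"
    using fun_cong[OF eq, of 0] b by (simp add: Fm_def)
  have "y 0 = z 0"
  proof (rule ccontr)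
    assume "y 0 \<noteq> z 0"
    then consider "y 0 < z 0" | "z 0 < y 0" by linarith
    then show False
      using oned_mono[of "bet k c s y / 2" "y 0" "z 0" s "c 0"] oned_mono[of "bet k c s y / 2" "z 0" "y 0" s "c 0"]
        bet_range[of s k c y] e0 assms by cases auto
  qed
  then show "y = z" using oth by (metis less_one linorder_not_le ext)
qed

lemma moved_Fm:
  assumes "s > 0" "\<forall>i\<ge>k. y i = 0" "\<forall>i\<ge>k. c i = 0" "Fm k c s y \<noteq> y"
  shows "y \<in> ocube k c s"
proof -
  have "Fm k c s y 0 \<noteq> y 0"
    using assms(4) by (auto simp: Fm_def fun_eq_iff split: if_splits)
  then have nz: "bet k c s y \<noteq> 0" "max 0 (s - \<bar>y 0 - c 0\<bar>) \<noteq> 0"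
    by (auto simp: Fm_def)
  then have a0: "\<bar>y 0 - c 0\<bar> < s" by linarith
  have "\<forall>i\<in>{1..<k}. max 0 (1 - \<bar>y i - c i\<bar> / s) \<noteq> 0"
    using nz(1) unfolding bet_def by (simp add: prod_zero_iff)
  then have ai: "\<bar>y i - c i\<bar> < s" if "1 \<le> i" "i < k" for i
    using that assms(1) by (force simp: max_def field_simps split: if_splits)
  have "\<bar>y i - c i\<bar> < s" if "i < k" for i
    using a0 ai that by (cases "i = 0") auto
  then show ?thesis using assms(2) by (auto simp: ocube_def)
qed

lemma Fm_center:
  assumes "s > 0" shows "Fm k c s c \<noteq> c"
proof -
  have "bet k c s c = 1" unfolding bet_def by simp
  then have "Fm k c s c 0 = c 0 + s / 2" using assms by (simp add: Fm_def)
  then have "Fm k c s c 0 \<noteq> c 0" using assms by simp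
  then show ?thesis by metis
qed


lemma image_Fm:
  assumes "k \<ge> 1" "0 < s" "s \<le> s0"
  shows "Fm k c s ` cube k c s0 = cube k c s0"
proof
  show "Fm k c s ` cube k c s0 \<subseteq> cube k c s0"
  proof clarify
    fix y assume y: "y \<in> cube k c s0"
    define u where "u = y 0 - c 0"
    define b where "b = bet k c s y / 2"
    have b: "0 \<le> b" "b \<le> 1/2" using bet_range[of s k c y] assms by (auto simp: b_def)
    have u: "\<bar>u\<bar> \<le> s0" using y assms by (auto simp: cube_def u_def)
    have m1: "b * max 0 (s - \<bar>u\<bar>) \<le> max 0 (s - \<bar>u\<bar>)" "0 \<le> b * max 0 (s - \<bar>u\<bar>)"
      using b by (auto intro: mult_left_le_one_le)
    have "\<bar>u + b * max 0 (s - \<bar>u\<bar>)\<bar> \<le> s0"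
      proof (cases "\<bar>u\<bar> < s")
      case True
      then have eq: "max 0 (s - \<bar>u\<bar>) = s - \<bar>u\<bar>" by simp
      have w: "0 \<le> b*(s-\<bar>u\<bar>)" "b*(s-\<bar>u\<bar>) \<le> s-\<bar>u\<bar>" using m1 unfolding eq by simp_all
      show ?thesis unfolding eq using w u assms True by arith
    next
      case False
      then have "max 0 (s - \<bar>u\<bar>) = 0" by simp
      then show ?thesis using u by simp
    qed
    then have F0: "\<bar>Fm k c s y 0 - c 0\<bar> \<le> s0"
      by (simp add: Fm_def u_def b_def algebra_simps)
    have A1: "\<forall>i<k. \<bar>Fm k c s y i - c i\<bar> \<le> s0"
    proof (intro allI impI)
      fix i assume ik: "i < k"
      show "\<bar>Fm k c s y i - c i\<bar> \<le> s0"
      proof (cases "i = 0")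
        case True
        then show ?thesis using F0 by simp
      next
        case False
        then have "Fm k c s y i = y i" by (simp add: Fm_def)
        then show ?thesis using y ik by (simp add: cube_def)
      qed
    qed
    have A2: "\<forall>i\<ge>k. Fm k c s y i = 0"
    proof (intro allI impI)
      fix i assume "i \<ge> k"
      then have "i \<noteq> 0" "y i = 0" using assms(1) y by (auto simp: cube_def)
      then show "Fm k c s y i = 0" by (simp add: Fm_def)
    qed
    show "Fm k c s y \<in> cube k c s0" using A1 A2 by (simp add: cube_def)
  qed
next
  show "cube k c s0 \<subseteq> Fm k c s ` cube k c s0"
  proof
    fix z assume z: "z \<in> cube k c s0"
    define b where "b = bet k c s z / 2"
    define h where "h = (\<lambda>t. t + b * max 0 (s - \<bar>t - c 0\<bar>))"
    have z0: "c 0 - s0 \<le> z 0" "z 0 \<le> c 0 + s0" using z assms(1) by (auto simp: cube_def abs_le_iff)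
    have "h (c 0 - s0) = c 0 - s0" "h (c 0 + s0) = c 0 + s0" using assms by (auto simp: h_def)
    moreover have "continuous_on {c 0 - s0..c 0 + s0} h" unfolding h_def by (intro continuous_intros)
    ultimately obtain t where t: "c 0 - s0 \<le> t" "t \<le> c 0 + s0" "h t = z 0"
      using IVT'[of h "c 0 - s0" "z 0" "c 0 + s0"] z0 by auto
    define y where "y = z(0 := t)"
    have bz: "bet k c s y = bet k c s z" by (rule bet_cong) (simp add: y_def)
    have "Fm k c s y = z"
    proof (rule ext)
      fix i show "Fm k c s y i = z i"
      proof (cases "i = 0")
        case True
        have "y 0 = t" by (simp add: y_def)
        then have "Fm k c s y 0 = h t" by (simp add: Fm_def bz b_def h_def)
        then show ?thesis using True t(3) by simp
      next
        case False
        then show ?thesis by (simp add: Fm_def y_def)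
      qed
    qed
    moreover have "y \<in> cube k c s0" using z t assms(1) by (auto simp: cube_def y_def)
    ultimately show "z \<in> Fm k c s ` cube k c s0" by blast
  qed
qed


lemma local_flex:
  fixes A G :: "'a::metric_space set" and p :: 'a
  assumes A: "open A" "topological_manifold_of_dim A k" "k \<ge> 1" "p \<in> A" and G: "open G" "p \<in> G"
  shows "\<exists>Y. compact Y \<and> Y \<subseteq> A \<inter> G \<and> p \<in> interior Y \<and>
            (\<forall>\<delta>>0. \<exists>\<phi>\<in>Homeo_boundary Y. 0 < radius Y \<phi> \<and> radius Y \<phi> < \<delta>)"
proof -
  define T where "T = {y::nat\<Rightarrow>real. \<forall>i\<ge>k. y i = 0}"
  have ES: "Euclidean_space k = top_of_set T"
    by (simp add: T_def Euclidean_space_def euclidean_product_topology)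
  obtain V W where V: "openin (top_of_set A) V" "p \<in> V" and W: "openin (top_of_set T) W"
     and hs: "top_of_set V homeomorphic_space subtopology (top_of_set T) W"
    using A(2,4) unfolding topological_manifold_of_dim_def ES by blast
  have WT: "W \<subseteq> T" using W openin_imp_subset by force
  have hs': "top_of_set V homeomorphic_space top_of_set W"
    using hs WT by (simp add: subtopology_subtopology Int_absorb1)
  have oV: "open V" using V(1) A(1) openin_open_trans by blast
  obtain h g where hg: "homeomorphism V W h g" using hs' hm unfolding homeomorphic_space_def by blast
  have hgW: "\<And>w. w \<in> W \<Longrightarrow> h (g w) = w" using hg by (simp add: homeomorphism_apply2)
  have ghV: "\<And>v. v \<in> V \<Longrightarrow> g (h v) = v" using hg by (simp add: homeomorphism_apply1)
  have gW: "\<And>w. w \<in> W \<Longrightarrow> g w \<in> V" using hg unfolding homeomorphism_def by blast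
  have hV: "\<And>v. v \<in> V \<Longrightarrow> h v \<in> W" using hg unfolding homeomorphism_def by blast
  have contg: "continuous_on W g" and conth: "continuous_on V h"
    using hg unfolding homeomorphism_def by blast+
  define c where "c = h p"
  have cW: "c \<in> W" using hV V(2) c_def by blast
  have cT: "\<forall>i\<ge>k. c i = 0" using cW WT T_def by blast
  have gc: "g c = p" using ghV V(2) c_def by blast
  have cubeT: "\<And>s. cube k c s \<subseteq> T" by (auto simp: cube_def T_def)
  have small: "\<exists>s>0. cube k c s \<subseteq> W \<and> g ` cube k c s \<subseteq> B" if B: "open B" "p \<in> B" for B
  proof -
    have "openin (top_of_set W) (W \<inter> g -` B)"
      using continuous_openin_preimage_gen[OF contg B(1)] .
    then have "openin (top_of_set T) (W \<inter> g -` B)" using W openin_trans by blast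
    then obtain O2 where O2: "open O2" "W \<inter> g -` B = T \<inter> O2" unfolding openin_open by blast
    have "c \<in> O2" using O2(2) cW gc B(2) by blast
    then obtain s where s: "s > 0" "cube k c s \<subseteq> O2" using cube_in_open[OF O2(1) _ cT] by blast
    then have "cube k c s \<subseteq> W \<inter> g -` B" using O2(2) cubeT by blast
    then show ?thesis using s(1) by blast
  qed
  have open_img: "open (g ` S)" if "openin (top_of_set T) S" "S \<subseteq> W" for S
  proof -
    have "openin (top_of_set W) S" using openin_subset_trans[OF that WT] .
    then have "openin (top_of_set V) (g ` S)"
      using homeomorphism_imp_open_map[OF homeomorphism_symD[OF hg]] by blast
    then show ?thesis using oV openin_open_trans by blast
  qed
  have ocube_cube: "ocube k c s \<subseteq> cube k c s" for s by (auto simp: ocube_def cube_def)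
  have cube_mono: "s \<le> s' \<Longrightarrow> cube k c s \<subseteq> cube k c s'" for s s' by (auto simp: cube_def)
  have c_cube: "s \<ge> 0 \<Longrightarrow> c \<in> cube k c s" for s using cT by (auto simp: cube_def)
  have c_ocube: "s > 0 \<Longrightarrow> c \<in> ocube k c s" for s using cT by (auto simp: ocube_def)
  have oAG: "open (A \<inter> G)" "p \<in> A \<inter> G" using A G by auto
  obtain s0 where s0: "s0 > 0" "cube k c s0 \<subseteq> W" "g ` cube k c s0 \<subseteq> A \<inter> G"
    using small[OF oAG] by blast
  define Y where "Y = g ` cube k c s0"
  have YV: "Y \<subseteq> V" using s0(2) gW Y_def by blast
  have cY: "compact Y" unfolding Y_def
    using compact_continuous_image[OF continuous_on_subset[OF contg s0(2)] compact_cube] .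
  have pY: "p \<in> interior Y"
  proof -
    have "open (g ` ocube k c s0)"
      using open_img[OF open_ocube[of k c s0, folded T_def]] ocube_cube s0(2) by blast
    moreover have "g ` ocube k c s0 \<subseteq> Y" using ocube_cube Y_def by blast
    moreover have "p \<in> g ` ocube k c s0" using c_ocube[OF s0(1)] gc by blast
    ultimately show ?thesis using interior_maximal by blast
  qed
  have "h ` Y = (\<lambda>w. h (g w)) ` cube k c s0" by (simp add: Y_def image_image)
  also have "\<dots> = (\<lambda>w. w) ` cube k c s0" by (rule image_cong) (use hgW s0(2) in auto)
  finally have hY: "h ` Y = cube k c s0" by simp
  have ginj: "inj_on g W" using hgW by (metis inj_onI)
  have main: "\<exists>\<phi>\<in>Homeo_boundary Y. 0 < radius Y \<phi> \<and> radius Y \<phi> < \<delta>" if "\<delta> > 0" for \<delta>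
  proof -
    have "open (ball p (\<delta>/4))" "p \<in> ball p (\<delta>/4)" using that by auto
    then obtain s1 where s1: "s1 > 0" "cube k c s1 \<subseteq> W" "g ` cube k c s1 \<subseteq> ball p (\<delta>/4)"
      using small by blast
    define s where "s = min s1 (s0/2)"
    have s: "s > 0" "s \<le> s0" "s \<le> s1" using s0 s1 by (auto simp: s_def)
    define F where "F = Fm k c s"
    define \<phi> where "\<phi> = (\<lambda>y. g (F (h y)))"
    have Fimg: "F ` cube k c s0 = cube k c s0" unfolding F_def by (rule image_Fm[OF A(3) s(1,2)])
    have Fimg2: "F ` cube k c s = cube k c s" unfolding F_def by (rule image_Fm[OF A(3) s(1)]) simp
    have phiY: "\<phi> ` Y = Y"
    proof -
      have "\<phi> ` Y = g ` F ` h ` Y" unfolding \<phi>_def by (simp add: image_image)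
      then show ?thesis using hY Fimg Y_def by simp
    qed
    have injphi: "inj_on \<phi> Y"
    proof (rule inj_onI)
      fix y1 y2 assume y: "y1 \<in> Y" "y2 \<in> Y" "\<phi> y1 = \<phi> y2"
      have "F (h y1) \<in> W" "F (h y2) \<in> W" using y(1,2) hY Fimg s0(2) by blast+
      moreover have "g (F (h y1)) = g (F (h y2))" using y(3) unfolding \<phi>_def .
      ultimately have "F (h y1) = F (h y2)" using inj_onD[OF ginj] by blast
      then have "h y1 = h y2" using injD[OF inj_Fm[OF s(1)]] unfolding F_def by blast
      moreover have "g (h y1) = y1" "g (h y2) = y2" using y(1,2) YV ghV by blast+
      ultimately show "y1 = y2" by metis
    qed
    have contphi: "continuous_on Y \<phi>"
    proof -
      have "continuous_on Y (\<lambda>y. F (h y))"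
        using continuous_on_compose2[OF cont_Fm[OF s(1)] continuous_on_subset[OF conth YV]]
        unfolding F_def by simp
      moreover have "(\<lambda>y. F (h y)) ` Y = F ` (h ` Y)" by (simp add: image_image)
      then have "(\<lambda>y. F (h y)) ` Y \<subseteq> W" using hY Fimg s0(2) by simp
      ultimately show ?thesis unfolding \<phi>_def using continuous_on_compose2[OF contg] by blast
    qed
    obtain \<psi> where psi: "homeomorphism Y Y \<phi> \<psi>"
      using homeomorphism_compact[OF cY contphi phiY injphi] by blast
    have moved: "h y \<in> ocube k c s" if "y \<in> Y" "\<phi> y \<noteq> y" for y
    proof -
      have "g (h y) = y" using ghV YV that(1) by blast
      then have "F (h y) \<noteq> h y" using that(2) unfolding \<phi>_def by metis
      moreover have "\<forall>i\<ge>k. h y i = 0" using that YV hV WT T_def by blast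
      ultimately show ?thesis using moved_Fm[OF s(1) _ cT] unfolding F_def by blast
    qed
    have ocs_W: "ocube k c s \<subseteq> W" using ocube_cube cube_mono[OF s(2)] s0(2) by blast
    have bd: "\<forall>x\<in>rel_boundary Y. \<phi> x = x"
    proof (rule ballI, rule ccontr)
      fix y assume y: "y \<in> rel_boundary Y" "\<phi> y \<noteq> y"
      have yY: "y \<in> Y" using y(1) by (simp add: rel_boundary_def)
      have hy: "h y \<in> ocube k c s" using moved yY y(2) by blast
      have "open (g ` ocube k c s)"
        using open_img[OF open_ocube[of k c s, folded T_def] ocs_W] .
      moreover have "g ` ocube k c s \<subseteq> Y"
        using ocube_cube cube_mono[OF s(2)] Y_def by blast
      moreover have "g (h y) = y" using ghV YV yY by blast
      then have "y \<in> g ` ocube k c s" using hy by (metis image_eqI)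
      ultimately have "y \<in> interior Y" using interior_maximal by blast
      moreover have "y \<in> closure (- Y)" using y(1) by (simp add: rel_boundary_def Compl_eq_Diff_UNIV)
      ultimately show False by (simp add: closure_complement)
    qed
    have disp: "dist x (ext_id Y \<phi> x) \<le> \<delta>/2" for x
    proof (cases "x \<in> Y \<and> \<phi> x \<noteq> x")
      case True
      then have hx: "h x \<in> cube k c s" using moved ocube_cube by blast
      then have "F (h x) \<in> cube k c s" using Fimg2 by blast
      then have "F (h x) \<in> cube k c s1" using cube_mono[OF s(3)] by blast
      then have "g (F (h x)) \<in> g ` cube k c s1" by (rule imageI)
      then have d1: "\<phi> x \<in> ball p (\<delta>/4)" using s1(3) unfolding \<phi>_def by blast
      have "g (h x) = x" using ghV YV True by blast
      moreover have "h x \<in> cube k c s1" using hx cube_mono[OF s(3)] by blast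
      ultimately have "x \<in> g ` cube k c s1" by (metis imageI)
      then have d2: "x \<in> ball p (\<delta>/4)" using s1(3) by blast
      have "dist x (\<phi> x) \<le> dist x p + dist (\<phi> x) p" by (rule dist_triangle2)
      then have "dist x (\<phi> x) \<le> \<delta>/2" using d1 d2
        by (simp add: dist_commute)
      then show ?thesis using True by (simp add: ext_id_def)
    next
      case False
      then show ?thesis using that by (auto simp: ext_id_def)
    qed
    have pYY: "p \<in> Y" using pY interior_subset by blast
    have "F c \<noteq> c" using Fm_center[OF s(1)] F_def by simp
    moreover have "F c \<in> W"
    proof -
      have "c \<in> cube k c s0" using c_cube s0(1) by simp
      then have "F c \<in> F ` cube k c s0" by (rule imageI)
      then show ?thesis using Fimg s0(2) by auto
    qed
    ultimately have "g (F c) \<noteq> g c" using inj_onD[OF ginj _ _ cW] by blast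
    then have "\<phi> p \<noteq> p" using gc unfolding \<phi>_def c_def by simp
    then have pos: "0 < dist p (ext_id Y \<phi> p)" using pYY by (simp add: ext_id_def)
    have bdd: "bdd_above (range (\<lambda>x. dist x (ext_id Y \<phi> x)))"
      by (rule bdd_aboveI[of _ "\<delta>/2"]) (use disp in auto)
    have r0: "dist p (ext_id Y \<phi> p) \<le> radius Y \<phi>"
      unfolding radius_def by (rule cSUP_upper[OF _ bdd]) simp
    have r1: "radius Y \<phi> \<le> \<delta>/2"
      unfolding radius_def by (rule cSUP_least) (simp, rule disp)
    have hb: "\<phi> \<in> Homeo_boundary Y" using psi bd by (auto simp: Homeo_boundary_def)
    have "0 < radius Y \<phi>" using pos r0 by linarith
    moreover have "radius Y \<phi> < \<delta>" using r1 that by linarith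
    ultimately show ?thesis using hb by blast
  qed
  show ?thesis using cY s0(3) pY main Y_def by blast
qed


lemma no_limpt:
  assumes "closed (range x)" "\<forall>n. \<exists>V. open V \<and> V \<inter> range x = {x n}"
  shows "\<not> z islimpt range x"
proof
  assume z: "z islimpt range x"
  then have "z \<in> range x" using assms(1) closed_limpt by blast
  then obtain m where zm: "z = x m" by blast
  obtain V where V: "open V" "V \<inter> range x = {x m}" using assms(2) by blast
  have "x m \<in> V" using V(2) by blast
  then obtain y where "y \<in> range x" "y \<in> V" "y \<noteq> x m" using z zm V(1) by (meson islimptE)
  then show False using V(2) by blast
qed

lemma seq_choice:
  fixes r :: "'b \<Rightarrow> real"
  assumes "\<forall>\<delta>>0. \<exists>a\<in>S. 0 < r a \<and> r a < \<delta>"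
  shows "\<exists>f. (\<forall>m. f m \<in> S) \<and> decseq (\<lambda>m. r (f m)) \<and> (\<lambda>m. r (f m)) \<longlonglongrightarrow> 0 \<and> (\<forall>m. r (f m) \<noteq> 0)"
proof -
  define P where "P n a \<longleftrightarrow> a \<in> S \<and> 0 < r a \<and> r a < inverse (real (Suc n))" for n a
  have "\<exists>f. \<forall>n. P n (f n) \<and> r (f (Suc n)) \<le> r (f n)"
  proof (rule dependent_nat_choice)
    show "\<exists>x. P 0 x" using assms unfolding P_def by (metis zero_less_one of_nat_1 inverse_1 One_nat_def)
  next
    fix x n assume "P n x"
    then have "min (r x) (inverse (real (Suc (Suc n)))) > 0" by (simp add: P_def)
    then obtain a where "a \<in> S" "0 < r a" "r a < min (r x) (inverse (real (Suc (Suc n))))" using assms by blast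
    then show "\<exists>y. P (Suc n) y \<and> r y \<le> r x" unfolding P_def by (intro exI[of _ a]) auto
  qed
  then obtain f where f: "\<And>n. P n (f n)" "\<And>n. r (f (Suc n)) \<le> r (f n)" by blast
  have "decseq (\<lambda>m. r (f m))" using f(2) by (simp add: decseq_Suc_iff)
  moreover have "(\<lambda>m. r (f m)) \<longlonglongrightarrow> 0"
  proof (rule tendsto_sandwich[of "\<lambda>_. 0" _ _ "\<lambda>n. inverse (real (Suc n))"])
    show "\<forall>\<^sub>F n in sequentially. 0 \<le> r (f n)" using f(1) by (simp add: P_def less_imp_le)
    show "\<forall>\<^sub>F n in sequentially. r (f n) \<le> inverse (real (Suc n))" using f(1) by (simp add: P_def less_imp_le)
    show "(\<lambda>_. 0::real) \<longlonglongrightarrow> 0" by (rule tendsto_const)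
    show "(\<lambda>n. inverse (real (Suc n))) \<longlonglongrightarrow> 0" by (rule LIMSEQ_inverse_real_of_nat)
  qed
  moreover have "\<forall>m. f m \<in> S" using f(1) unfolding P_def by blast
  moreover have "\<forall>m. r (f m) \<noteq> 0" using f(1) unfolding P_def by (metis order_less_irrefl)
  ultimately show ?thesis by blast
qed

lemma flex_core:
  fixes x :: "nat \<Rightarrow> 'a::metric_space" and A :: "nat \<Rightarrow> 'a set"
  assumes lc: "locally_compact_space (euclidean :: 'a topology)"
    and pol: "Polish_topology (euclidean :: 'a topology)"
    and ix: "inj x" and cl: "closed (range x)" and iso: "\<forall>n. \<exists>V. open V \<and> V \<inter> range x = {x n}"
    and dis: "\<forall>n m. n \<noteq> m \<longrightarrow> A n \<inter> A m = {}"
    and loc: "\<And>n G. open G \<Longrightarrow> x n \<in> G \<Longrightarrow> \<exists>Y. compact Y \<and> Y \<subseteq> A n \<inter> G \<and>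
                 (\<forall>\<delta>>0. \<exists>\<phi>\<in>Homeo_boundary Y. 0 < radius Y \<phi> \<and> radius Y \<phi> < \<delta>)"
  shows "flexible TYPE('a)"
proof -
  have nolim: "\<not> z islimpt range x" for z using no_limpt[OF cl iso] .
  have ncomp: "\<not> compact (UNIV :: 'a set)"
  proof
    assume "compact (UNIV :: 'a set)"
    moreover have "infinite (range x)" using ix by (rule range_inj_infinite)
    ultimately show False using Heine_Borel_imp_Bolzano_Weierstrass[of UNIV "range x"] nolim by blast
  qed
  have "\<forall>n. \<exists>Y. compact Y \<and> Y \<subseteq> A n \<inter> ball (x n) (inverse (real (Suc n))) \<and>
                 (\<forall>\<delta>>0. \<exists>\<phi>\<in>Homeo_boundary Y. 0 < radius Y \<phi> \<and> radius Y \<phi> < \<delta>)"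
  proof
    fix n
    have "open (ball (x n) (inverse (real (Suc n))))" "x n \<in> ball (x n) (inverse (real (Suc n)))" by auto
    then show "\<exists>Y. compact Y \<and> Y \<subseteq> A n \<inter> ball (x n) (inverse (real (Suc n))) \<and>
                 (\<forall>\<delta>>0. \<exists>\<phi>\<in>Homeo_boundary Y. 0 < radius Y \<phi> \<and> radius Y \<phi> < \<delta>)"
      by (rule loc)
  qed
  then obtain Y where Y0: "\<forall>n. compact (Y n) \<and> Y n \<subseteq> A n \<inter> ball (x n) (inverse (real (Suc n))) \<and>
                 (\<forall>\<delta>>0. \<exists>\<phi>\<in>Homeo_boundary (Y n). 0 < radius (Y n) \<phi> \<and> radius (Y n) \<phi> < \<delta>)"
    by (rule choice[THEN exE])
  have Y: "\<And>n. compact (Y n)" "\<And>n. Y n \<subseteq> A n \<inter> ball (x n) (inverse (real (Suc n)))"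
    "\<And>n. \<forall>\<delta>>0. \<exists>\<phi>\<in>Homeo_boundary (Y n). 0 < radius (Y n) \<phi> \<and> radius (Y n) \<phi> < \<delta>"
    using Y0 by blast+
  have "\<forall>n. \<exists>f. (\<forall>m. f m \<in> Homeo_boundary (Y n)) \<and> decseq (\<lambda>m. radius (Y n) (f m)) \<and>
           (\<lambda>m. radius (Y n) (f m)) \<longlonglongrightarrow> 0 \<and> (\<forall>m. radius (Y n) (f m) \<noteq> 0)"
  proof
    fix n show "\<exists>f. (\<forall>m. f m \<in> Homeo_boundary (Y n)) \<and> decseq (\<lambda>m. radius (Y n) (f m)) \<and>
           (\<lambda>m. radius (Y n) (f m)) \<longlonglongrightarrow> 0 \<and> (\<forall>m. radius (Y n) (f m) \<noteq> 0)"
      by (rule seq_choice[OF Y(3)])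
  qed
  then obtain \<phi> where \<phi>: "\<forall>n. (\<forall>m. \<phi> n m \<in> Homeo_boundary (Y n)) \<and> decseq (\<lambda>m. radius (Y n) (\<phi> n m)) \<and>
           (\<lambda>m. radius (Y n) (\<phi> n m)) \<longlonglongrightarrow> 0 \<and> (\<forall>m. radius (Y n) (\<phi> n m) \<noteq> 0)"
    by (rule choice[THEN exE])
  have disY: "\<forall>n m. n \<noteq> m \<longrightarrow> Y n \<inter> Y m = {}" using dis Y(2) by blast
  have lf: "finite {n. K \<inter> Y n \<noteq> {}}" if K: "compact K" for K
  proof (rule ccontr)
    define N where "N = {n. K \<inter> Y n \<noteq> {}}"
    assume "infinite {n. K \<inter> Y n \<noteq> {}}"
    then have infN: "infinite N" by (simp add: N_def)
    define y where "y n = (SOME z. z \<in> K \<inter> Y n)" for n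
    have y: "y n \<in> K \<inter> Y n" if "n \<in> N" for n
      using that unfolding N_def y_def by (metis (mono_tags, lifting) ex_in_conv mem_Collect_eq someI_ex)
    have iny: "inj_on y N"
    proof (rule inj_onI)
      fix a b assume ab: "a \<in> N" "b \<in> N" "y a = y b"
      show "a = b"
      proof (rule ccontr)
        assume "a \<noteq> b"
        then have "Y a \<inter> Y b = {}" using disY by blast
        moreover have "y a \<in> Y a" using y[OF ab(1)] by (rule IntD2)
        moreover have "y a \<in> Y b" using y[OF ab(2)] ab(3) by simp
        ultimately show False by (auto simp: disjoint_iff)
      qed
    qed
    have infT: "infinite (y ` N)" using infN iny finite_imageD by blast
    have "y ` N \<subseteq> K" using y by blast
    then obtain z where "z \<in> K" and z: "z islimpt (y ` N)"
      using Heine_Borel_imp_Bolzano_Weierstrass[OF K infT] by blast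
    have "z islimpt range x"
    proof (unfold islimpt_approachable, intro allI impI)
      fix e :: real assume e: "e > 0"
      have e2: "e/2 > 0" using e by simp
      have inf1: "infinite (y ` N \<inter> ball z (e/2))" using z e2 unfolding islimpt_eq_infinite_ball by blast
      define N' where "N' = {n \<in> N. y n \<in> ball z (e/2)}"
      have "y ` N \<inter> ball z (e/2) \<subseteq> y ` N'" unfolding N'_def by blast
      then have infN': "infinite N'" using inf1 finite_subset by blast
      obtain N0 where N0: "inverse (real (Suc N0)) < e/2" using e
        using reals_Archimedean[OF e2] by blast
      have fin1: "finite {n. x n = z}"
        using finite_vimageI[of "{z}" x] ix by (simp add: vimage_def)
      have "finite ({..<N0} \<union> {n. x n = z})" using fin1 by simp
      then have "infinite (N' - ({..<N0} \<union> {n. x n = z}))" using infN' by (meson Diff_infinite_finite)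
      then obtain n where "n \<in> N' - ({..<N0} \<union> {n. x n = z})" using infinite_imp_nonempty by blast
      then have n: "n \<in> N'" "n \<ge> N0" "x n \<noteq> z" by auto
      have i1: "inverse (real (Suc n)) \<le> inverse (real (Suc N0))" using n(2) by (simp add: le_imp_inverse_le)
      have "y n \<in> Y n" using y n(1) unfolding N'_def by blast
      then have i2: "dist (x n) (y n) < inverse (real (Suc n))" using Y(2)[of n] by auto
      have i3: "dist (y n) z < e/2" using n(1) unfolding N'_def by (simp add: dist_commute)
      have i4: "dist (x n) z \<le> dist (x n) (y n) + dist (y n) z" by (rule dist_triangle)
      have "dist (x n) z < e" using i1 i2 i3 i4 N0 by linarith
      then show "\<exists>x'\<in>range x. x' \<noteq> z \<and> dist x' z < e" using n(3) by blast
    qed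
    then show False using nolim by blast
  qed
  have p1: "\<forall>n m. \<phi> n m \<in> Homeo_boundary (Y n)" using \<phi> by blast
  have p2: "\<forall>n. decseq (\<lambda>m. radius (Y n) (\<phi> n m))" using \<phi> by blast
  have p3: "\<forall>n. (\<lambda>m. radius (Y n) (\<phi> n m)) \<longlonglongrightarrow> 0" using \<phi> by blast
  have p4: "\<forall>n m. radius (Y n) (\<phi> n m) \<noteq> 0" using \<phi> by blast
  have p0: "\<forall>n. compact (Y n)" using Y(1) by blast
  have lf': "\<forall>K. compact K \<longrightarrow> finite {n. K \<inter> Y n \<noteq> {}}" using lf by blast
  show ?thesis
    unfolding flexible_def
    apply (intro conjI lc pol ncomp)
    apply (rule exI[of _ Y])
    apply (rule exI[of _ \<phi>])
    apply (intro conjI disY p0 lf' p1 p2 p3 p4)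
    done
qed


lemma part2:
  fixes d :: nat
  assumes nc: "\<not> compact (UNIV :: 'a::metric_space set)" and sc: "second_countable (euclidean :: 'a topology)"
    and d: "d \<ge> 1" and man: "topological_manifold_of_dim (UNIV :: 'a set) d"
  shows "flexible TYPE('a)"
proof -
  have lc: "locally_compact_space (euclidean :: 'a topology)"
    unfolding locally_compact_space_def
  proof
    fix p :: 'a
    obtain Y where "compact Y" "p \<in> interior Y"
      using local_flex[OF open_UNIV man d UNIV_I open_UNIV UNIV_I] by blast
    then show "\<exists>U K. openin euclidean U \<and> compactin euclidean K \<and> p \<in> U \<and> U \<subseteq> K"
      by (intro exI[of _ "interior Y"] exI[of _ Y]) (auto simp: interior_subset)
  qed
  have pol: "Polish_topology (euclidean :: 'a topology)"
    unfolding Polish_topology_def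
    using second_countable_imp_separable_space[OF sc]
      locally_compact_imp_completely_metrizable_space[OF metrizable_space_euclidean lc] by blast
  obtain T :: "'a set" where T: "infinite T" "\<forall>z. \<not> z islimpt T"
    using nc unfolding compact_eq_Bolzano_Weierstrass by blast
  obtain x :: "nat \<Rightarrow> 'a" where x: "inj x" "range x \<subseteq> T"
    using infinite_countable_subset[OF T(1)] by blast
  have nolim: "\<not> z islimpt range x" for z using T(2) x(2) islimpt_subset by blast
  have cl: "closed (range x)" using nolim closed_limpt by blast
  have iso: "\<forall>n. \<exists>V. open V \<and> V \<inter> range x = {x n}"
  proof
    fix n
    obtain V where "x n \<in> V" "open V" "\<forall>y\<in>range x. y \<in> V \<longrightarrow> y = x n"
      using nolim[of "x n"] unfolding islimpt_def by blast
    then show "\<exists>V. open V \<and> V \<inter> range x = {x n}" by blast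
  qed
  have "\<forall>n. \<exists>e>0. \<forall>y\<in>range x. y \<noteq> x n \<longrightarrow> e \<le> dist y (x n)"
    using nolim unfolding islimpt_approachable by (meson not_le)
  then obtain e where e: "\<forall>n. e n > 0 \<and> (\<forall>y\<in>range x. y \<noteq> x n \<longrightarrow> e n \<le> dist y (x n))"
    by (rule choice[THEN exE]) blast
  define A where "A n = ball (x n) (e n / 3)" for n
  have dis: "\<forall>n m. n \<noteq> m \<longrightarrow> A n \<inter> A m = {}"
  proof (intro allI impI)
    fix n m :: nat assume nm: "n \<noteq> m"
    show "A n \<inter> A m = {}"
    proof (rule ccontr)
      assume "A n \<inter> A m \<noteq> {}"
      then obtain z where z: "dist (x n) z < e n / 3" "dist (x m) z < e m / 3" unfolding A_def by auto
      have "x m \<noteq> x n" using injD[OF x(1), of m n] nm by auto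
      then have "e n \<le> dist (x m) (x n)" "e m \<le> dist (x n) (x m)" using e by auto
      moreover have "dist (x n) (x m) \<le> dist (x n) z + dist (x m) z" by (rule dist_triangle2)
      moreover have "0 \<le> dist (x n) z" "0 \<le> dist (x m) z" by simp_all
      moreover have "dist (x m) (x n) = dist (x n) (x m)" by (rule dist_commute)
      ultimately show False using z by linarith
    qed
  qed
  show ?thesis
  proof (rule flex_core[OF lc pol x(1) cl iso dis])
    fix n and G :: "'a set" assume G: "open G" "x n \<in> G"
    have oG: "open (G \<inter> A n)" "x n \<in> G \<inter> A n" using G e by (auto simp: A_def)
    obtain Y where "compact Y" "Y \<subseteq> UNIV \<inter> (G \<inter> A n)"
      "\<forall>\<delta>>0. \<exists>\<phi>\<in>Homeo_boundary Y. 0 < radius Y \<phi> \<and> radius Y \<phi> < \<delta>"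
      using local_flex[OF open_UNIV man d UNIV_I oG(1) oG(2)] by blast
    then show "\<exists>Y. compact Y \<and> Y \<subseteq> A n \<inter> G \<and>
                 (\<forall>\<delta>>0. \<exists>\<phi>\<in>Homeo_boundary Y. 0 < radius Y \<phi> \<and> radius Y \<phi> < \<delta>)" by blast
  qed
qed

lemma part1:
  fixes x :: "nat \<Rightarrow> 'a::metric_space" and U :: "nat \<Rightarrow> 'a set" and k :: "nat \<Rightarrow> nat"
  assumes lc: "locally_compact_space (euclidean :: 'a topology)"
    and pol: "Polish_topology (euclidean :: 'a topology)"
    and ix: "inj x" and cl: "closed (range x)" and iso: "\<forall>n. \<exists>V. open V \<and> V \<inter> range x = {x n}"
    and U: "\<forall>n. open (U n) \<and> x n \<in> U n"
    and dis: "\<forall>n m. n \<noteq> m \<longrightarrow> U n \<inter> U m = {}"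
    and man: "\<forall>n. k n \<ge> 1 \<and> topological_manifold_of_dim (U n) (k n)"
  shows "flexible TYPE('a)"
proof (rule flex_core[OF lc pol ix cl iso dis])
  fix n and G :: "'a set" assume G: "open G" "x n \<in> G"
  have u: "open (U n)" "x n \<in> U n" using U by blast+
  have m: "k n \<ge> 1" "topological_manifold_of_dim (U n) (k n)" using man by blast+
  obtain Y where "compact Y" "Y \<subseteq> U n \<inter> G"
      "\<forall>\<delta>>0. \<exists>\<phi>\<in>Homeo_boundary Y. 0 < radius Y \<phi> \<and> radius Y \<phi> < \<delta>"
    using local_flex[OF u(1) m(2) m(1) u(2) G] by blast
  then show "\<exists>Y. compact Y \<and> Y \<subseteq> U n \<inter> G \<and>
                 (\<forall>\<delta>>0. \<exists>\<phi>\<in>Homeo_boundary Y. 0 < radius Y \<phi> \<and> radius Y \<phi> < \<delta>)" by blast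
qed

theorem mainTheorem8:
  fixes x :: "nat \<Rightarrow> 'a::metric_space"
    and U :: "nat \<Rightarrow> 'a set"
    and k :: "nat \<Rightarrow> nat"
  shows
   "(locally_compact_space (euclidean :: 'a topology) \<and>
     Polish_topology (euclidean :: 'a topology) \<and>
     inj x \<and> closed (range x) \<and>
     (\<forall>n. \<exists>V. open V \<and> V \<inter> range x = {x n}) \<and>
     (\<forall>n. open (U n) \<and> x n \<in> U n) \<and>
     (\<forall>n m. n \<noteq> m \<longrightarrow> U n \<inter> U m = {}) \<and>
     (\<forall>n. k n \<ge> 1 \<and> topological_manifold_of_dim (U n) (k n))
     \<longrightarrow> flexible TYPE('a))
    \<and>
    (\<forall>d::nat. \<not> compact (UNIV :: 'a set) \<and>
     second_countable (euclidean :: 'a topology) \<and>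
     d \<ge> 1 \<and> topological_manifold_of_dim (UNIV :: 'a set) d
     \<longrightarrow> flexible TYPE('a))"
proof (intro conjI impI allI)
  show "flexible TYPE('a)" if H: "locally_compact_space (euclidean :: 'a topology) \<and>
     Polish_topology (euclidean :: 'a topology) \<and>
     inj x \<and> closed (range x) \<and>
     (\<forall>n. \<exists>V. open V \<and> V \<inter> range x = {x n}) \<and>
     (\<forall>n. open (U n) \<and> x n \<in> U n) \<and>
     (\<forall>n m. n \<noteq> m \<longrightarrow> U n \<inter> U m = {}) \<and>
     (\<forall>n. k n \<ge> 1 \<and> topological_manifold_of_dim (U n) (k n))"
    using H
    apply (elim conjE)
    apply (rule part1[of x U k])
           apply assumption+
    done
next
  fix d :: nat
  show "flexible TYPE('a)" if H: "\<not> compact (UNIV :: 'a set) \<and> second_countable (euclidean :: 'a topology) \<and>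
     d \<ge> 1 \<and> topological_manifold_of_dim (UNIV :: 'a set) d"
    using H
    apply (elim conjE)
    apply (rule part2[of d])
       apply assumption+
    done
qed

end
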